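(* Let $\mathbf{Z}=\{\mathbf{z}_i\}_{i=1}^n$ be a $G$-networked sample and $\xi$ a function on $\mathcal{Z}$ with mean $\mu$, variance $\sigma^2$, and $|\xi(\mathbf{z})-\mu|\le M$ for $\rho$-almost all $\mathbf{z}$. If $\mathbf{w}$ is an optimal weighting of $G$ and $\mathsf{s}=\mathsf{s}(G)$, then for all $\epsilon>0$, $$\Pr\Big(\sum_{i=1}^n w_i(\xi(\mathbf{z}_i)-\mu)\ge\epsilon\Big)\le\exp\Big(-\frac{\mathsf{s}\sigma^2}{M^2}\,h\Big(\frac{M\epsilon}{\mathsf{s}\sigma^2}\Big)\Big),$$ where $h(a)=(1+a)\log(1+a)-a$.
   Context: Networked setting: $G$ is a $k$-partite hypergraph with hyperedges $e_1,\dots,e_n$; vertex set partitioned into $V^{(1)},\dots,V^{(k)}$, each hyperedge containing exactly one vertex $e^{(j)}$ of each $V^{(j)}$. $\mathcal{X}=\mathcal{X}^{(1)}\times\cdots\times\mathcal{X}^{(k)}$ (compact metric spaces), $\mathcal{Y}=\mathbb{R}$, $\mathcal{Z}=\mathcal{X}\times\mathcal{Y}$. Each vertex $v\in V^{(j)}$ gets a feature $\phi(v)$ drawn independently from $\rho_j$, independently of the hypergraph. Hyperedge $e_i$ yields $\mathbf{z}_i=(\mathbf{x}_i,y_i)$, $\mathbf{x}_i=(\phi(e_i^{(1)}),\dots,\phi(e_i^{(k)}))$, labels conditionally independent given the features with $y_i\sim\rho_{y|\mathbf{x}}(\cdot\mid\mathbf{x}_i)$; $\rho=\rho_{y|\mathbf{x}}\rho_{\mathbf{x}}$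 with $\rho_{\mathbf{x}}=\prod_j\rho_j$, and mean/variance of $\xi$ are with respect to $\rho$. A feasible weighting is $\mathbf{w}$ with $w_i\ge0$ and $\sum_{i:\,v\in e_i}w_i\le1$ for every vertex $v$; $\mathsf{s}(G)=\max\sum_i w_i$ over feasible weightings, attained by an optimal weighting. *)

theory Defs
  imports "HOL-Probability.Probability"
begin

text \<open>k-partite hypergraph with vertex set V, vpart assignment vpart (V^(j) = {v in V. vpart v = j}),
  and hyperedges e_0,...,e_{n-1}; hyperedge i contains exactly the vertices e i j, j < k,
  where e i j is its vertex in vpart j.\<close>
definition kpartite_hypergraph ::
  "nat \<Rightarrow> 'v set \<Rightarrow> ('v \<Rightarrow> nat) \<Rightarrow> nat \<Rightarrow> (nat \<Rightarrow> nat \<Rightarrow> 'v) \<Rightarrow> bool" where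
  "kpartite_hypergraph k V vpart n e \<longleftrightarrow>
     finite V \<and> (\<forall>v\<in>V. vpart v < k) \<and> (\<forall>i<n. \<forall>j<k. e i j \<in> V \<and> vpart (e i j) = j)"

definition hedge :: "nat \<Rightarrow> (nat \<Rightarrow> nat \<Rightarrow> 'v) \<Rightarrow> nat \<Rightarrow> 'v set" where
  "hedge k e i = {e i j | j. j < k}"

definition feasible_weighting ::
  "nat \<Rightarrow> 'v set \<Rightarrow> nat \<Rightarrow> (nat \<Rightarrow> nat \<Rightarrow> 'v) \<Rightarrow> (nat \<Rightarrow> real) \<Rightarrow> bool" where
  "feasible_weighting k V n e w \<longleftrightarrow>
     (\<forall>i<n. 0 \<le> w i) \<and> (\<forall>v\<in>V. (\<Sum>i\<in>{i. i < n \<and> v \<in> hedge k e i}. w i) \<le> 1)"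

definition s_G :: "nat \<Rightarrow> 'v set \<Rightarrow> nat \<Rightarrow> (nat \<Rightarrow> nat \<Rightarrow> 'v) \<Rightarrow> real" where
  "s_G k V n e = Sup {(\<Sum>i<n. w i) | w. feasible_weighting k V n e w}"

definition optimal_weighting ::
  "nat \<Rightarrow> 'v set \<Rightarrow> nat \<Rightarrow> (nat \<Rightarrow> nat \<Rightarrow> 'v) \<Rightarrow> (nat \<Rightarrow> real) \<Rightarrow> bool" where
  "optimal_weighting k V n e w \<longleftrightarrow>
     feasible_weighting k V n e w \<and> (\<Sum>i<n. w i) = s_G k V n e"

text \<open>Feature space X = X^(1) x ... x X^(k), rendered as extensional functions on {..<k}
  with the product measure rho_x = prod_j rho_j.\<close>
definition rho_x :: "nat \<Rightarrow> (nat \<Rightarrow> 'x measure) \<Rightarrow> (nat \<Rightarrow> 'x) measure" where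
  "rho_x k rho = PiM {..<k} rho"

text \<open>Joint distribution rho = rho_{y|x} rho_x on Z = X x R, where K x = rho_{y|x}(. | x).\<close>
definition rho_joint ::
  "nat \<Rightarrow> (nat \<Rightarrow> 'x measure) \<Rightarrow> ((nat \<Rightarrow> 'x) \<Rightarrow> real measure) \<Rightarrow> ((nat \<Rightarrow> 'x) \<times> real) measure" where
  "rho_joint k rho K = rho_x k rho \<bind> (\<lambda>x. distr (K x) (rho_x k rho \<Otimes>\<^sub>M borel) (\<lambda>y. (x, y)))"

definition feature_measure :: "'v set \<Rightarrow> ('v \<Rightarrow> nat) \<Rightarrow> (nat \<Rightarrow> 'x measure) \<Rightarrow> ('v \<Rightarrow> 'x) measure" where
  "feature_measure V vpart rho = PiM V (\<lambda>v. rho (vpart v))"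

definition hedge_features :: "nat \<Rightarrow> (nat \<Rightarrow> nat \<Rightarrow> 'v) \<Rightarrow> nat \<Rightarrow> ('v \<Rightarrow> 'x) \<Rightarrow> (nat \<Rightarrow> 'x)" where
  "hedge_features k e i \<phi> = restrict (\<lambda>j. \<phi> (e i j)) {..<k}"

text \<open>Underlying probability space of a G-networked sample: outcomes (phi, y) with
  phi the vertex features and y the labels; given phi, the labels y_i are independent
  with y_i ~ K x_i.\<close>
definition networked_space ::
  "nat \<Rightarrow> 'v set \<Rightarrow> ('v \<Rightarrow> nat) \<Rightarrow> (nat \<Rightarrow> 'x measure) \<Rightarrow> ((nat \<Rightarrow> 'x) \<Rightarrow> real measure)
    \<Rightarrow> nat \<Rightarrow> (nat \<Rightarrow> nat \<Rightarrow> 'v) \<Rightarrow> (('v \<Rightarrow> 'x) \<times> (nat \<Rightarrow> real)) measure" where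
  "networked_space k V vpart rho K n e =
     feature_measure V vpart rho \<bind>
       (\<lambda>\<phi>. distr (PiM {..<n} (\<lambda>i. K (hedge_features k e i \<phi>)))
                   (feature_measure V vpart rho \<Otimes>\<^sub>M PiM {..<n} (\<lambda>_. borel))
                   (\<lambda>y. (\<phi>, y)))"

definition sample_z :: "nat \<Rightarrow> (nat \<Rightarrow> nat \<Rightarrow> 'v) \<Rightarrow> nat \<Rightarrow> ('v \<Rightarrow> 'x) \<times> (nat \<Rightarrow> real) \<Rightarrow> (nat \<Rightarrow> 'x) \<times> real" where
  "sample_z k e i \<omega> = (hedge_features k e i (fst \<omega>), snd \<omega> i)"

definition bennett_h :: "real \<Rightarrow> real" where
  "bennett_h a = (1 + a) * ln (1 + a) - a"

end

theory Submission
  imports Defs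
begin

lemma exp_tail_sums: "(\<lambda>n. (x::real)^(n+2) / fact (n+2)) sums (exp x - 1 - x)"
proof -
  have "(\<lambda>n. x^n / fact n) sums exp x" using exp_converges[of x] by (simp add: divide_inverse mult.commute)
  then have "(\<lambda>n. x^(n+2) / fact (n+2)) sums (exp x - (\<Sum>n<2. x^n / fact n))"
    by (subst sums_iff_shift) simp
  then show ?thesis by (simp add: numeral_2_eq_2 diff_diff_eq)
qed

lemma exp_bennett_aux:
  fixes u U :: real assumes "\<bar>u\<bar> \<le> U" "U > 0"
  shows "exp u - 1 - u \<le> u^2 / U^2 * (exp U - 1 - U)"
proof -
  have s1: "(\<lambda>n. u^(n+2) / fact (n+2)) sums (exp u - 1 - u)" by (rule exp_tail_sums)
  have s2: "(\<lambda>n. u^2 / U^2 * (U^(n+2) / fact (n+2))) sums (u^2 / U^2 * (exp U - 1 - U))"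
    by (rule sums_mult[OF exp_tail_sums])
  show ?thesis
  proof (rule sums_le[OF _ s1 s2])
    fix n
    have "u^(n+2) \<le> \<bar>u\<bar>^(n+2)" by (metis abs_ge_self power_abs)
    also have "\<dots> = u^2 * \<bar>u\<bar>^n" by (simp add: power_add power2_abs mult.commute power2_eq_square)
    also have "\<dots> \<le> u^2 * U^n" by (intro mult_left_mono power_mono) (use assms in auto)
    also have "\<dots> = u^2 / U^2 * U^(n+2)" using assms by (simp add: power_add field_simps power2_eq_square)
    finally have "u^(n+2) \<le> u^2 / U^2 * U^(n+2)" .
    from divide_right_mono[OF this fact_ge_zero]
    show "u^(n+2) / fact (n+2) \<le> u^2 / U^2 * (U^(n+2) / fact (n+2))"
      unfolding times_divide_eq_right .
  qed
qed

lemma exp_bennett_pointwise: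
  fixes x t M :: real assumes "\<bar>x\<bar> \<le> M" "M > 0" "t \<ge> 0"
  shows "exp (t*x) \<le> 1 + t*x + x^2 / M^2 * (exp (t*M) - 1 - t*M)"
proof (cases "t = 0")
  case True then show ?thesis by simp
next
  case False
  then have t: "t > 0" using assms by simp
  have "\<bar>t*x\<bar> \<le> t*M" using assms t by (simp add: abs_mult mult_left_mono)
  from exp_bennett_aux[OF this] have "exp (t*x) - 1 - t*x \<le> (t*x)^2/(t*M)^2 * (exp (t*M) - 1 - t*M)"
    using t assms by simp
  also have "(t*x)^2/(t*M)^2 = x^2/M^2" using t by (simp add: power_mult_distrib)
  finally show ?thesis by simp
qed

lemma weighted_amgm:
  fixes a w :: "'i \<Rightarrow> real"
  assumes "finite J" "\<And>j. j \<in> J \<Longrightarrow> a j > 0" "\<And>j. j \<in> J \<Longrightarrow> w j \<ge> 0" "sum w J \<le> 1"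
  shows "(\<Prod>j\<in>J. a j powr w j) \<le> (\<Sum>j\<in>J. w j * a j) + (1 - sum w J)"
proof -
  let ?S = "insert None (Some ` J)"
  let ?c = "\<lambda>q. case q of None \<Rightarrow> 1 - sum w J | Some j \<Rightarrow> w j"
  let ?y = "\<lambda>q. case q of None \<Rightarrow> 0 | Some j \<Rightarrow> ln (a j)"
  have cvx: "convex_on UNIV exp" using convex_on_exp[of 1] by simp
  have fin: "finite ?S" using assms by simp
  have sumc: "sum ?c ?S = 1" using assms(1) by (simp add: sum.reindex inj_on_def)
  have "exp (\<Sum>q\<in>?S. ?c q *\<^sub>R ?y q) \<le> (\<Sum>q\<in>?S. ?c q * exp (?y q))"
    by (rule convex_on_sum[OF fin _ cvx sumc]) (use assms in \<open>auto split: option.splits\<close>)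
  also have "(\<Sum>q\<in>?S. ?c q * exp (?y q)) = (\<Sum>j\<in>J. w j * a j) + (1 - sum w J)"
    using assms by (simp add: sum.reindex inj_on_def)
  also have "(\<Sum>q\<in>?S. ?c q *\<^sub>R ?y q) = (\<Sum>j\<in>J. w j * ln (a j))"
    using assms(1) by (simp add: sum.reindex inj_on_def)
  also have "exp (\<Sum>j\<in>J. w j * ln (a j)) = (\<Prod>j\<in>J. a j powr w j)"
    using assms by (auto simp: exp_sum powr_def mult.commute intro!: prod.cong) (metis less_irrefl)
  finally show ?thesis .
qed

lemma prod_powr_bound:
  fixes f :: "'i \<Rightarrow> real"
  assumes "\<And>j. j \<in> J \<Longrightarrow> a \<le> f j \<and> f j \<le> b" "a > 0" "\<And>j. j \<in> J \<Longrightarrow> w j \<ge> 0"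
  shows "\<bar>\<Prod>j\<in>J. f j powr w j\<bar> \<le> (\<Prod>j\<in>J. b powr w j)"
proof -
  have "\<bar>\<Prod>j\<in>J. f j powr w j\<bar> = (\<Prod>j\<in>J. f j powr w j)"
    by (intro abs_of_nonneg prod_nonneg) auto
  also have "\<dots> \<le> (\<Prod>j\<in>J. b powr w j)"
    by (intro prod_mono conjI powr_mono2) (use assms in \<open>auto intro: order_trans[of 0 a]\<close>)
  finally show ?thesis .
qed

lemma holder_prob:
  fixes f :: "'i \<Rightarrow> 'a \<Rightarrow> real"
  assumes N: "prob_space N" and J: "finite J"
    and meas: "\<And>j. j \<in> J \<Longrightarrow> f j \<in> borel_measurable N"
    and bnd: "\<And>j x. j \<in> J \<Longrightarrow> x \<in> space N \<Longrightarrow> a \<le> f j x \<and> f j x \<le> b"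
    and a: "a > 0" and w: "\<And>j. j \<in> J \<Longrightarrow> w j \<ge> 0" and W: "sum w J \<le> 1"
  shows "(\<integral>x. (\<Prod>j\<in>J. f j x powr w j) \<partial>N) \<le> (\<Prod>j\<in>J. (\<integral>x. f j x \<partial>N) powr w j)"
proof -
  interpret prob_space N by (rule N)
  have int: "integrable N (f j)" if "j \<in> J" for j
  proof (rule integrable_const_bound[where B=b])
    show "AE x in N. norm (f j x) \<le> b"
    proof (rule AE_I2)
      fix x assume "x \<in> space N" with bnd[OF that this] a show "norm (f j x) \<le> b" by auto
    qed
  qed (rule meas[OF that])
  define c where "c j = (\<integral>x. f j x \<partial>N)" for j
  have c: "c j \<ge> a" if "j \<in> J" for j
    unfolding c_def by (rule integral_ge_const[OF int[OF that] AE_I2]) (use bnd that in auto)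
  have cpos: "c j > 0" if "j \<in> J" for j using c[OF that] a by simp
  define C where "C = (\<Prod>j\<in>J. c j powr w j)"
  have Cpos: "C > 0" unfolding C_def using cpos by (intro prod_pos) (metis less_irrefl powr_gt_zero)
  have measP: "(\<lambda>x. \<Prod>j\<in>J. f j x powr w j) \<in> borel_measurable N"
    using meas by measurable
  have intP: "integrable N (\<lambda>x. \<Prod>j\<in>J. f j x powr w j)"
    by (rule integrable_const_bound[where B="\<Prod>j\<in>J. b powr w j"])
       (use bnd a w in \<open>auto intro!: AE_I2 measP prod_powr_bound\<close>)
  have intR: "integrable N (\<lambda>x. (\<Sum>j\<in>J. w j * (f j x / c j)) + (1 - sum w J))"
    using int by auto
  have pw: "(\<Prod>j\<in>J. f j x powr w j) / C \<le> (\<Sum>j\<in>J. w j * (f j x / c j)) + (1 - sum w J)"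
    if x: "x \<in> space N" for x
  proof -
    have "(\<Prod>j\<in>J. f j x powr w j) / C = (\<Prod>j\<in>J. (f j x / c j) powr w j)"
      unfolding C_def prod_dividef[symmetric]
      by (intro prod.cong refl powr_divide[symmetric]) 
    also have "\<dots> \<le> (\<Sum>j\<in>J. w j * (f j x / c j)) + (1 - sum w J)"
    proof (rule weighted_amgm[OF J _ w W])
      fix j assume j: "j \<in> J"
      have "f j x > 0" using bnd[OF j x] a by linarith
      then show "f j x / c j > 0" using cpos[OF j] by simp
    qed
    finally show ?thesis .
  qed
  have "(\<integral>x. (\<Prod>j\<in>J. f j x powr w j) \<partial>N) / C = (\<integral>x. (\<Prod>j\<in>J. f j x powr w j) / C \<partial>N)"
    by simp
  also have "\<dots> \<le> (\<integral>x. (\<Sum>j\<in>J. w j * (f j x / c j)) + (1 - sum w J) \<partial>N)"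
    by (rule integral_mono[OF _ intR pw]) (use intP in auto)
  also have "\<dots> = (\<Sum>j\<in>J. w j * (c j / c j)) + (1 - sum w J)"
    using int by (auto simp: integral_sum c_def prob_space intro!: sum.cong)
  also have "\<dots> = 1" using cpos by (auto intro!: sum.cong) (metis less_irrefl)
  finally show ?thesis using Cpos unfolding C_def c_def by (simp add: divide_le_eq)
qed

lemma prob_integral_bounds:
  fixes f :: "'a \<Rightarrow> real"
  assumes N: "prob_space N" and f: "f \<in> borel_measurable N"
    and b: "\<And>x. x \<in> space N \<Longrightarrow> a \<le> f x \<and> f x \<le> b"
  shows "integrable N f" "a \<le> (\<integral>x. f x \<partial>N)" "(\<integral>x. f x \<partial>N) \<le> b"
proof -
  interpret prob_space N by (rule N)
  show int: "integrable N f"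
  proof (rule integrable_const_bound[where B="max \<bar>a\<bar> \<bar>b\<bar>"])
    show "AE x in N. norm (f x) \<le> max \<bar>a\<bar> \<bar>b\<bar>"
    proof (rule AE_I2)
      fix x assume "x \<in> space N" from b[OF this] show "norm (f x) \<le> max \<bar>a\<bar> \<bar>b\<bar>" by auto
    qed
  qed (rule f)
  show "a \<le> (\<integral>x. f x \<partial>N)" by (rule integral_ge_const[OF int AE_I2]) (use b in auto)
  show "(\<integral>x. f x \<partial>N) \<le> b" by (rule integral_le_const[OF int AE_I2]) (use b in auto)
qed

lemma measG:
  fixes F :: "'i \<Rightarrow> ('v \<Rightarrow> 'a) \<Rightarrow> real"
  assumes "\<And>i. i \<in> I \<Longrightarrow> S i \<subseteq> V" "\<And>i. i \<in> I \<Longrightarrow> F i \<in> borel_measurable (PiM (S i) M)"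
  shows "(\<lambda>\<phi>. \<Prod>i\<in>I. F i (restrict \<phi> (S i)) powr w i) \<in> borel_measurable (PiM V M)"
proof (rule borel_measurable_prod)
  fix i assume i: "i \<in> I"
  have "(\<lambda>\<phi>. F i (restrict \<phi> (S i))) \<in> borel_measurable (PiM V M)"
    by (rule measurable_compose[OF measurable_restrict_subset[OF assms(1)[OF i]] assms(2)[OF i]])
  then show "(\<lambda>\<phi>. F i (restrict \<phi> (S i)) powr w i) \<in> borel_measurable (PiM V M)"
    by measurable
qed

lemma finner:
  fixes M :: "'v \<Rightarrow> 'a measure" and F :: "'i \<Rightarrow> ('v \<Rightarrow> 'a) \<Rightarrow> real"
    and S :: "'i \<Rightarrow> 'v set" and w :: "'i \<Rightarrow> real"
  assumes V: "finite V" and M: "\<And>v. prob_space (M v)" and I: "finite I"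
    and S: "\<And>i. i \<in> I \<Longrightarrow> S i \<subseteq> V"
    and F: "\<And>i. i \<in> I \<Longrightarrow> F i \<in> borel_measurable (PiM (S i) M)"
    and bnd: "\<And>i x. i \<in> I \<Longrightarrow> x \<in> space (PiM (S i) M) \<Longrightarrow> a \<le> F i x \<and> F i x \<le> b"
    and a: "a > 0" and w: "\<And>i. i \<in> I \<Longrightarrow> w i \<ge> 0"
    and W: "\<And>v. v \<in> V \<Longrightarrow> sum w {i\<in>I. v \<in> S i} \<le> 1"
  shows "(\<integral>\<phi>. (\<Prod>i\<in>I. F i (restrict \<phi> (S i)) powr w i) \<partial>PiM V M)
           \<le> (\<Prod>i\<in>I. (\<integral>x. F i x \<partial>PiM (S i) M) powr w i)"
  using V S F bnd W
proof (induction V arbitrary: S F rule: finite_induct)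
  case empty
  then have Se: "S i = {}" if "i \<in> I" for i using that by auto
  have r: "restrict \<phi> {} = (\<lambda>_. undefined)" for \<phi> :: "'v \<Rightarrow> 'a" by auto
  have "(\<integral>\<phi>. (\<Prod>i\<in>I. F i (restrict \<phi> (S i)) powr w i) \<partial>PiM {} M)
      = (\<Prod>i\<in>I. F i (\<lambda>_. undefined) powr w i)"
    by (simp add: PiM_empty lebesgue_integral_count_space_finite Se r cong: prod.cong)
  also have "\<dots> = (\<Prod>i\<in>I. (\<integral>x. F i x \<partial>PiM (S i) M) powr w i)"
    by (intro prod.cong refl) (simp add: Se PiM_empty lebesgue_integral_count_space_finite)
  finally show ?case by (rule eq_refl)
next
  case (insert v V0)
  interpret PS: product_sigma_finite M
    unfolding product_sigma_finite_def using M prob_space_imp_sigma_finite by blast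
  interpret Mv: prob_space "M v" by (rule M)
  have PiMprob: "prob_space (PiM X M)" for X using M by (intro prob_space_PiM) auto
  define S' where "S' i = S i - {v}" for i
  define F' where "F' i \<psi> = (if v \<in> S i then (\<integral>y. F i (\<psi>(v:=y)) \<partial>M v) else F i \<psi>)" for i \<psi>
  define A where "A = {i\<in>I. v \<in> S i}"
  have SS': "insert v (S' i) = S i" if "i \<in> A" for i using that by (auto simp: S'_def A_def)
  have vS': "v \<notin> S' i" for i by (simp add: S'_def)
  have upd_space: "\<psi>(v:=y) \<in> space (PiM (S i) M)"
    if "i \<in> A" "\<psi> \<in> space (PiM (S' i) M)" "y \<in> space (M v)" for i \<psi> y
    using that SS'[OF that(1)] by (auto simp: space_PiM PiE_iff extensional_def S'_def)
  have Fupd_meas: "(\<lambda>y. F i (\<psi>(v:=y))) \<in> borel_measurable (M v)"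
    if "i \<in> A" "\<psi> \<in> space (PiM (S' i) M)" for i \<psi>
  proof -
    have "(\<lambda>y. \<psi>(v:=y)) \<in> measurable (M v) (PiM (insert v (S' i)) M)"
      by (rule measurable_component_update[OF that(2) vS'])
    then show ?thesis using insert.prems(2)[of i] that(1) SS'[OF that(1)]
      by (auto simp: A_def intro: measurable_compose)
  qed
  have Fupd_bnd: "a \<le> F i (\<psi>(v:=y)) \<and> F i (\<psi>(v:=y)) \<le> b"
    if "i \<in> A" "\<psi> \<in> space (PiM (S' i) M)" "y \<in> space (M v)" for i \<psi> y
    using insert.prems(3)[OF _ upd_space[OF that]] that(1) unfolding A_def by blast
  have F'meas: "F' i \<in> borel_measurable (PiM (S' i) M)" if i: "i \<in> I" for i
  proof (cases "v \<in> S i")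
    case True
    have "(\<lambda>(\<psi>, y). F i (\<psi>(v:=y))) \<in> borel_measurable (PiM (S' i) M \<Otimes>\<^sub>M M v)"
    proof -
      have "(\<lambda>(\<psi>, y). \<psi>(v:=y)) \<in> measurable (PiM (S' i) M \<Otimes>\<^sub>M M v) (PiM (insert v (S' i)) M)"
        by (rule measurable_add_dim)
      moreover have "insert v (S' i) = S i" using True by (auto simp: S'_def)
      ultimately show ?thesis using insert.prems(2)[OF i]
        by (auto intro: measurable_compose[where f="\<lambda>(\<psi>, y). \<psi>(v:=y)" and g="F i", simplified case_prod_beta])
    qed
    then have "(\<lambda>\<psi>. \<integral>y. F i (\<psi>(v:=y)) \<partial>M v) \<in> borel_measurable (PiM (S' i) M)"
      by (rule sigma_finite_measure.borel_measurable_lebesgue_integral[OF prob_space_imp_sigma_finite[OF M]])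
    then show ?thesis using True by (simp add: F'_def[abs_def])
  next
    case False
    then show ?thesis using insert.prems(2)[OF i] by (simp add: F'_def[abs_def] S'_def)
  qed
  have F'bnd: "a \<le> F' i \<psi> \<and> F' i \<psi> \<le> b" if i: "i \<in> I" and \<psi>: "\<psi> \<in> space (PiM (S' i) M)" for i \<psi>
  proof (cases "v \<in> S i")
    case True
    then have iA: "i \<in> A" using i by (simp add: A_def)
    show ?thesis
      using prob_integral_bounds[OF M Fupd_meas[OF iA \<psi>] Fupd_bnd[OF iA \<psi>]] True
      by (simp add: F'_def)
  next
    case False
    then show ?thesis using insert.prems(3)[OF i] \<psi> by (simp add: F'_def S'_def)
  qed
  have S'sub: "S' i \<subseteq> V0" if "i \<in> I" for i using insert.prems(1)[OF that] by (auto simp: S'_def)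
  have W': "sum w {i\<in>I. u \<in> S' i} \<le> 1" if u: "u \<in> V0" for u
  proof -
    have "{i\<in>I. u \<in> S' i} = {i\<in>I. u \<in> S i}" using u insert.hyps(2) by (auto simp: S'_def)
    then show ?thesis using insert.prems(4)[of u] u by simp
  qed
  have IH: "(\<integral>\<phi>. (\<Prod>i\<in>I. F' i (restrict \<phi> (S' i)) powr w i) \<partial>PiM V0 M)
           \<le> (\<Prod>i\<in>I. (\<integral>x. F' i x \<partial>PiM (S' i) M) powr w i)"
    by (rule insert.IH[OF S'sub F'meas F'bnd W'])
  have intF'eq: "(\<integral>x. F' i x \<partial>PiM (S' i) M) = (\<integral>x. F i x \<partial>PiM (S i) M)" if i: "i \<in> I" for i
  proof (cases "v \<in> S i")
    case True
    then have iA: "i \<in> A" using i by (simp add: A_def)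
    have "integrable (PiM (S i) M) (F i)"
      using prob_integral_bounds(1)[OF PiMprob insert.prems(2)[OF i] insert.prems(3)[OF i]] .
    then have int: "integrable (PiM (insert v (S' i)) M) (F i)" using SS'[OF iA] by simp
    have "(\<integral>x. F i x \<partial>PiM (S i) M) = (\<integral>x. F i x \<partial>PiM (insert v (S' i)) M)" using SS'[OF iA] by simp
    also have "\<dots> = (\<integral>x. (\<integral>y. F i (x(v:=y)) \<partial>M v) \<partial>PiM (S' i) M)"
      by (rule PS.product_integral_insert[OF _ vS' int]) (use insert.hyps(1) S'sub[OF i] finite_subset in blast)
    finally show ?thesis using True by (simp add: F'_def)
  next
    case False then show ?thesis by (simp add: F'_def S'_def)
  qed
  define G where "G \<phi> = (\<Prod>i\<in>I. F i (restrict \<phi> (S i)) powr w i)" for \<phi>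
  define G' where "G' \<phi> = (\<Prod>i\<in>I. F' i (restrict \<phi> (S' i)) powr w i)" for \<phi>
  define B where "B = (\<Prod>i\<in>I. b powr w i)"
  have Gmeas: "G \<in> borel_measurable (PiM (insert v V0) M)"
    unfolding G_def[abs_def] by (rule measG[OF insert.prems(1,2)])
  have Gbnd: "\<bar>G \<phi>\<bar> \<le> B" if "\<phi> \<in> space (PiM (insert v V0) M)" for \<phi>
    unfolding G_def B_def
  proof (rule prod_powr_bound[OF _ a w])
    fix i assume i: "i \<in> I"
    have "restrict \<phi> (S i) \<in> space (PiM (S i) M)"
      using that insert.prems(1)[OF i] by (auto simp: space_PiM PiE_iff)
    then show "a \<le> F i (restrict \<phi> (S i)) \<and> F i (restrict \<phi> (S i)) \<le> b" by (rule insert.prems(3)[OF i])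
  qed
  have Gint: "integrable (PiM (insert v V0) M) G"
    by (rule prob_integral_bounds(1)[OF PiMprob Gmeas, of "-B" B]) (use Gbnd in \<open>fastforce simp: abs_le_iff\<close>)
  have G'meas: "G' \<in> borel_measurable (PiM V0 M)"
    unfolding G'_def[abs_def] by (rule measG[OF S'sub F'meas])
  have G'bnd: "\<bar>G' \<phi>\<bar> \<le> B" if "\<phi> \<in> space (PiM V0 M)" for \<phi>
    unfolding G'_def B_def
  proof (rule prod_powr_bound[OF _ a w])
    fix i assume i: "i \<in> I"
    have "restrict \<phi> (S' i) \<in> space (PiM (S' i) M)"
      using that S'sub[OF i] by (auto simp: space_PiM PiE_iff)
    then show "a \<le> F' i (restrict \<phi> (S' i)) \<and> F' i (restrict \<phi> (S' i)) \<le> b" by (rule F'bnd[OF i])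
  qed
  have G'int: "integrable (PiM V0 M) G'"
    by (rule prob_integral_bounds(1)[OF PiMprob G'meas, of "-B" B]) (use G'bnd in \<open>fastforce simp: abs_le_iff\<close>)
  have Hmeas: "(\<lambda>\<phi>. \<integral>y. G (\<phi>(v:=y)) \<partial>M v) \<in> borel_measurable (PiM V0 M)"
  proof (rule sigma_finite_measure.borel_measurable_lebesgue_integral[OF prob_space_imp_sigma_finite[OF M]])
    show "(\<lambda>(\<phi>, y). G (\<phi>(v:=y))) \<in> borel_measurable (PiM V0 M \<Otimes>\<^sub>M M v)"
      using measurable_compose[OF measurable_add_dim Gmeas] by (simp add: case_prod_beta)
  qed
  have Hbnd: "\<bar>\<integral>y. G (\<phi>(v:=y)) \<partial>M v\<bar> \<le> B" if "\<phi> \<in> space (PiM V0 M)" for \<phi>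
  proof -
    have m: "(\<lambda>y. G (\<phi>(v:=y))) \<in> borel_measurable (M v)"
      using measurable_compose[OF measurable_component_update[OF that insert.hyps(2)] Gmeas] .
    have "\<phi>(v:=y) \<in> space (PiM (insert v V0) M)" if "y \<in> space (M v)" for y
      using \<open>\<phi> \<in> space (PiM V0 M)\<close> that by (auto simp: space_PiM PiE_iff extensional_def)
    then have "-B \<le> G (\<phi>(v:=y)) \<and> G (\<phi>(v:=y)) \<le> B" if "y \<in> space (M v)" for y
      using Gbnd[of "\<phi>(v:=y)"] that by (auto simp: abs_le_iff)
    from prob_integral_bounds(2,3)[OF M m this] show ?thesis by (auto simp: abs_le_iff)
  qed
  have Hint: "integrable (PiM V0 M) (\<lambda>\<phi>. \<integral>y. G (\<phi>(v:=y)) \<partial>M v)"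
    by (rule prob_integral_bounds(1)[OF PiMprob Hmeas, of "-B" B]) (use Hbnd in \<open>fastforce simp: abs_le_iff\<close>)
  have pointwise: "(\<integral>y. G (\<phi>(v:=y)) \<partial>M v) \<le> G' \<phi>" if \<phi>: "\<phi> \<in> space (PiM V0 M)" for \<phi>
  proof -
    define C where "C = (\<Prod>i\<in>I-A. F i (restrict \<phi> (S i)) powr w i)"
    define f where "f i y = F i ((restrict \<phi> (S' i))(v:=y))" for i y
    have rs: "restrict \<phi> (S' i) \<in> space (PiM (S' i) M)" if "i \<in> I" for i
      using \<phi> S'sub[OF that] by (auto simp: space_PiM PiE_iff)
    have AI: "A \<subseteq> I" by (auto simp: A_def)
    have splitI: "(\<Prod>i\<in>I. h i) = (\<Prod>i\<in>A. h i) * (\<Prod>i\<in>I-A. h i)" for h :: "'i \<Rightarrow> real"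
      using prod.subset_diff[OF AI I] by (simp add: mult.commute)
    have eqA: "restrict (\<phi>(v:=y)) (S i) = (restrict \<phi> (S' i))(v:=y)" if "i \<in> A" for i y
      using SS'[OF that] vS'[of i] by (auto simp: restrict_def fun_eq_iff S'_def)
    have eqB: "restrict (\<phi>(v:=y)) (S i) = restrict \<phi> (S i)" if "i \<in> I - A" for i y
      using that by (auto simp: restrict_def fun_eq_iff A_def)
    have Gsplit: "G (\<phi>(v:=y)) = (\<Prod>i\<in>A. f i y powr w i) * C" for y
      unfolding G_def C_def f_def splitI[of "\<lambda>i. F i (restrict (\<phi>(v:=y)) (S i)) powr w i"]
      by (intro arg_cong2[where f="(*)"] prod.cong refl) (simp_all add: eqA eqB)
    have G'split: "G' \<phi> = (\<Prod>i\<in>A. (\<integral>y. f i y \<partial>M v) powr w i) * C"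
      unfolding G'_def C_def f_def splitI[of "\<lambda>i. F' i (restrict \<phi> (S' i)) powr w i"]
      by (intro arg_cong2[where f="(*)"] prod.cong refl) (auto simp: F'_def A_def S'_def)
    have Cnn: "C \<ge> 0" unfolding C_def by (intro prod_nonneg) auto
    have "(\<integral>y. G (\<phi>(v:=y)) \<partial>M v) = (\<integral>y. (\<Prod>i\<in>A. f i y powr w i) \<partial>M v) * C"
      by (simp add: Gsplit)
    also have "\<dots> \<le> (\<Prod>i\<in>A. (\<integral>y. f i y \<partial>M v) powr w i) * C"
    proof (rule mult_right_mono[OF holder_prob[OF M _ _ _ a] Cnn])
      show "finite A" using I AI finite_subset by blast
      show "f i \<in> borel_measurable (M v)" if "i \<in> A" for i
        unfolding f_def using Fupd_meas[OF that rs] that AI by auto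
      show "a \<le> f i y \<and> f i y \<le> b" if "i \<in> A" "y \<in> space (M v)" for i y
        unfolding f_def using Fupd_bnd[OF that(1) rs that(2)] that AI by auto
      show "w i \<ge> 0" if "i \<in> A" for i using w that AI by auto
      show "sum w A \<le> 1" unfolding A_def by (rule insert.prems(4)) simp
    qed
    also have "\<dots> = G' \<phi>" by (simp add: G'split)
    finally show ?thesis .
  qed
  have "(\<integral>\<phi>. (\<Prod>i\<in>I. F i (restrict \<phi> (S i)) powr w i) \<partial>PiM (insert v V0) M)
      = (\<integral>\<phi>. G \<phi> \<partial>PiM (insert v V0) M)" by (simp add: G_def)
  also have "\<dots> = (\<integral>\<phi>. (\<integral>y. G (\<phi>(v:=y)) \<partial>M v) \<partial>PiM V0 M)"
    by (rule PS.product_integral_insert[OF insert.hyps Gint])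
  also have "\<dots> \<le> (\<integral>\<phi>. G' \<phi> \<partial>PiM V0 M)"
    by (rule integral_mono[OF Hint G'int pointwise])
  also have "\<dots> \<le> (\<Prod>i\<in>I. (\<integral>x. F' i x \<partial>PiM (S' i) M) powr w i)"
    using IH by (simp add: G'_def)
  also have "\<dots> = (\<Prod>i\<in>I. (\<integral>x. F i x \<partial>PiM (S i) M) powr w i)"
    by (intro prod.cong refl) (simp add: intF'eq)
  finally show ?case .
qed

lemma jensen_powr:
  fixes f :: "'a \<Rightarrow> real"
  assumes N: "prob_space N" and f: "f \<in> borel_measurable N"
    and bnd: "\<And>x. x \<in> space N \<Longrightarrow> a \<le> f x \<and> f x \<le> b" and a: "a > 0"
    and w: "0 \<le> w" "w \<le> 1"
  shows "(\<integral>x. f x powr w \<partial>N) \<le> (\<integral>x. f x \<partial>N) powr w"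
proof -
  have "(\<integral>x. (\<Prod>j\<in>{()}. f x powr w) \<partial>N) \<le> (\<Prod>j\<in>{()}. (\<integral>x. f x \<partial>N) powr w)"
    by (rule holder_prob[OF N]) (use assms in auto)
  then show ?thesis by simp
qed

lemma PiM_kernel_measurable:
  assumes Kf: "\<And>i. i \<in> I \<Longrightarrow> Kf i \<in> measurable L (prob_algebra (N i))"
  shows "(\<lambda>x. PiM I (\<lambda>i. Kf i x)) \<in> measurable L (prob_algebra (PiM I N))"
proof (rule measurable_prob_algebra_generated[OF sets_PiM Int_stable_prod_algebra prod_algebra_sets_into_space])
  fix x assume x: "x \<in> space L"
  have Kx: "Kf i x \<in> space (prob_algebra (N i))" if "i \<in> I" for i
    using measurable_space[OF Kf[OF that] x] .
  then have sets_eq: "sets (Kf i x) = sets (N i)" and pr: "prob_space (Kf i x)" if "i \<in> I" for i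
    using that by (auto simp: space_prob_algebra)
  show "prob_space (PiM I (\<lambda>i. Kf i x))" using pr by (intro prob_space_PiM) auto
  show "sets (PiM I (\<lambda>i. Kf i x)) = sets (PiM I N)" using sets_eq by (intro sets_PiM_cong) auto
next
  fix A assume "A \<in> prod_algebra I N"
  then obtain J X where J: "J \<noteq> {} \<or> I = {}" "finite J" "J \<subseteq> I" "X \<in> (\<Pi> j\<in>J. sets (N j))"
    and A: "A = prod_emb I N J (\<Pi>\<^sub>E j\<in>J. X j)"
    by (auto simp: prod_algebra_def)
  have "(\<lambda>x. \<Prod>j\<in>J. emeasure (Kf j x) (X j)) \<in> borel_measurable L"
  proof (rule borel_measurable_prod_ennreal)
    fix j assume j: "j \<in> J"
    have "(\<lambda>M. emeasure M (X j)) \<in> borel_measurable (subprob_algebra (N j))"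
      using J j by (intro measurable_emeasure_subprob_algebra) auto
    then show "(\<lambda>x. emeasure (Kf j x) (X j)) \<in> borel_measurable L"
      using measurable_prob_algebraD[OF Kf] J j by (auto intro: measurable_compose)
  qed
  moreover have "emeasure (PiM I (\<lambda>i. Kf i x)) A = (\<Prod>j\<in>J. emeasure (Kf j x) (X j))"
    if x: "x \<in> space L" for x
  proof -
    have Kx: "Kf i x \<in> space (prob_algebra (N i))" if "i \<in> I" for i
      using measurable_space[OF Kf[OF that] x] .
    then have sets_eq: "sets (Kf i x) = sets (N i)" and pr: "prob_space (Kf i x)" if "i \<in> I" for i
      using that by (auto simp: space_prob_algebra)
    have sp: "space (Kf i x) = space (N i)" if "i \<in> I" for i
      using sets_eq[OF that] by (rule sets_eq_imp_space_eq)
    have "PiE I (\<lambda>i. space (Kf i x)) = PiE I (\<lambda>i. space (N i))" by (rule PiE_cong) (rule sp)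
    then have "A = prod_emb I (\<lambda>i. Kf i x) J (\<Pi>\<^sub>E j\<in>J. X j)"
      unfolding A prod_emb_def by simp
    moreover have "emeasure (PiM I (\<lambda>i. Kf i x)) (prod_emb I (\<lambda>i. Kf i x) J (\<Pi>\<^sub>E j\<in>J. X j))
        = (\<Prod>j\<in>J. emeasure (Kf j x) (X j))"
    proof (rule emeasure_PiM_emb)
      show "\<And>i. i \<in> I \<Longrightarrow> prob_space (Kf i x)" by (rule pr)
      show "J \<subseteq> I" "finite J" using J by auto
      show "\<And>i. i \<in> J \<Longrightarrow> X i \<in> sets (Kf i x)" using J sets_eq by auto
    qed
    ultimately show ?thesis by simp
  qed
  ultimately show "(\<lambda>x. emeasure (PiM I (\<lambda>i. Kf i x)) A) \<in> borel_measurable L"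
    using measurable_cong[of L "\<lambda>x. emeasure (PiM I (\<lambda>i. Kf i x)) A" "\<lambda>x. \<Prod>j\<in>J. emeasure (Kf j x) (X j)"]
    by simp
qed

theorem lemma2:
  fixes k n :: nat and V :: "'v set" and vpart :: "'v \<Rightarrow> nat" and e :: "nat \<Rightarrow> nat \<Rightarrow> 'v"
    and rho :: "nat \<Rightarrow> 'x measure" and K :: "(nat \<Rightarrow> 'x) \<Rightarrow> real measure"
    and \<xi> :: "(nat \<Rightarrow> 'x) \<times> real \<Rightarrow> real" and \<mu> \<sigma> M \<epsilon> :: real and w :: "nat \<Rightarrow> real"
  assumes G: "kpartite_hypergraph k V vpart n e" and k: "k \<ge> 1"
    and rho: "\<And>j. j < k \<Longrightarrow> prob_space (rho j)"
    and K: "K \<in> measurable (rho_x k rho) (prob_algebra borel)"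
    and \<xi>_meas: "\<xi> \<in> borel_measurable (rho_joint k rho K)"
    and \<xi>_int: "integrable (rho_joint k rho K) \<xi>"
    and mean: "\<mu> = (\<integral>z. \<xi> z \<partial>rho_joint k rho K)"
    and var: "\<sigma>\<^sup>2 = (\<integral>z. (\<xi> z - \<mu>)\<^sup>2 \<partial>rho_joint k rho K)"
    and bound: "AE z in rho_joint k rho K. \<bar>\<xi> z - \<mu>\<bar> \<le> M"
    and opt: "optimal_weighting k V n e w"
    and eps: "\<epsilon> > 0"
  shows "measure (networked_space k V vpart rho K n e)
           {\<omega> \<in> space (networked_space k V vpart rho K n e).
              (\<Sum>i<n. w i * (\<xi> (sample_z k e i \<omega>) - \<mu>)) \<ge> \<epsilon>}
         \<le> exp (- (s_G k V n e * \<sigma>\<^sup>2 / M\<^sup>2)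
                  * bennett_h (M * \<epsilon> / (s_G k V n e * \<sigma>\<^sup>2)))"
proof -
  define rhoX where "rhoX = rho_x k rho"
  define RJ where "RJ = rho_joint k rho K"
  define H where "H x = distr (K x) (rhoX \<Otimes>\<^sub>M borel) (\<lambda>y. (x, y))" for x
  have RJ_def': "RJ = rhoX \<bind> H" by (simp add: RJ_def rho_joint_def rhoX_def H_def[abs_def])
  have rhoX_prob: "prob_space rhoX" unfolding rhoX_def rho_x_def by (intro prob_space_PiM rho) auto
  have Kp: "K \<in> rhoX \<rightarrow>\<^sub>M prob_algebra borel" using K by (simp add: rhoX_def)
  have Hmeas: "H \<in> rhoX \<rightarrow>\<^sub>M prob_algebra (rhoX \<Otimes>\<^sub>M borel)"
    unfolding H_def by (rule measurable_distr_prob_space2[OF Kp]) measurable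
  have rhoX_sp: "rhoX \<in> space (prob_algebra rhoX)" using rhoX_prob by (simp add: space_prob_algebra)
  have RJ_prob: "prob_space RJ" unfolding RJ_def' by (rule prob_space_bind'[OF rhoX_sp Hmeas])
  have RJ_sets: "sets RJ = sets (rhoX \<Otimes>\<^sub>M borel)" unfolding RJ_def' by (rule sets_bind'[OF rhoX_sp Hmeas])
  have M0: "M \<ge> 0"
  proof (rule ccontr)
    assume "\<not> M \<ge> 0"
    then have "AE z in RJ. False" using bound unfolding RJ_def by (auto elim: eventually_mono)
    with prob_space.AE_False[OF RJ_prob] show False by simp
  qed
  define s where "s = s_G k V n e"
  have wnn: "0 \<le> w i" if "i < n" for i using opt that by (simp add: optimal_weighting_def feasible_weighting_def)
  have feas: "(\<Sum>i\<in>{i. i < n \<and> v \<in> hedge k e i}. w i) \<le> 1" if "v \<in> V" for v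
    using opt that by (simp add: optimal_weighting_def feasible_weighting_def)
  have ssum: "(\<Sum>i<n. w i) = s" using opt by (simp add: optimal_weighting_def s_def)
  have s0: "s \<ge> 0" unfolding ssum[symmetric] by (rule sum_nonneg) (simp add: wnn)
  have eV: "e i j \<in> V \<and> vpart (e i j) = j" if "i < n" "j < k" for i j
    using G that by (simp add: kpartite_hypergraph_def)
  have w1: "w i \<le> 1" if i: "i < n" for i
  proof -
    have v: "e i 0 \<in> V" using eV[OF i] k by simp
    have "w i \<le> (\<Sum>i'\<in>{i'. i' < n \<and> e i 0 \<in> hedge k e i'}. w i')"
      by (rule member_le_sum) (use i k wnn in \<open>auto simp: hedge_def\<close>)
    also have "\<dots> \<le> 1" by (rule feas[OF v])
    finally show ?thesis .
  qed
  define Mv where "Mv v = (if vpart v < k then rho (vpart v) else return (count_space UNIV) undefined)" for v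
  have Mv_prob: "prob_space (Mv v)" for v
    by (cases "vpart v < k") (auto simp: Mv_def rho intro: prob_space_return)
  define FM where "FM = feature_measure V vpart rho"
  have FM_eq: "FM = PiM V Mv"
    unfolding FM_def feature_measure_def using G by (intro PiM_cong) (auto simp: Mv_def kpartite_hypergraph_def)
  have FM_prob: "prob_space FM" unfolding FM_eq by (intro prob_space_PiM Mv_prob)
  have Mv_e: "Mv (e i j) = rho j" if "i < n" "j < k" for i j using eV[OF that] that by (simp add: Mv_def)
  have reidx_meas: "(\<lambda>\<omega>. \<lambda>j\<in>{..<k}. \<omega> (e i j)) \<in> PiM K' Mv \<rightarrow>\<^sub>M rhoX"
    if i: "i < n" and K': "e i ` {..<k} \<subseteq> K'" for i K'
    unfolding rhoX_def rho_x_def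
  proof (rule measurable_restrict)
    fix j :: nat assume j: "j \<in> {..<k}"
    have "(\<lambda>\<omega>. \<omega> (e i j)) \<in> PiM K' Mv \<rightarrow>\<^sub>M Mv (e i j)"
      using K' j by (intro measurable_component_singleton) auto
    then show "(\<lambda>\<omega>. \<omega> (e i j)) \<in> PiM K' Mv \<rightarrow>\<^sub>M rho j" using Mv_e[OF i] j by simp
  qed
  have reidx_distr: "distr (PiM K' Mv) rhoX (\<lambda>\<omega>. \<lambda>j\<in>{..<k}. \<omega> (e i j)) = rhoX"
    if i: "i < n" and K': "e i ` {..<k} \<subseteq> K'" for i K'
  proof -
    have inj: "inj_on (e i) {..<k}"
      by (rule inj_onI) (metis eV[OF i] lessThan_iff)
    have eq: "PiM {..<k} (\<lambda>j. Mv (e i j)) = rhoX"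
      unfolding rhoX_def rho_x_def by (intro PiM_cong) (auto simp: Mv_e[OF i])
    have "distr (PiM K' Mv) (PiM {..<k} (\<lambda>j. Mv (e i j))) (\<lambda>\<omega>. \<lambda>j\<in>{..<k}. \<omega> (e i j))
        = PiM {..<k} (\<lambda>j. Mv (e i j))"
      by (rule distr_PiM_reindex[OF Mv_prob inj]) (use K' in auto)
    then show ?thesis unfolding eq .
  qed
  define hf :: "nat \<Rightarrow> ('v \<Rightarrow> 'x) \<Rightarrow> (nat \<Rightarrow> 'x)" where "hf i = hedge_features k e i" for i
  have hf_eq: "hf i = (\<lambda>\<omega>. \<lambda>j\<in>{..<k}. \<omega> (e i j))" for i
    by (simp add: hf_def hedge_features_def[abs_def])
  have eV': "e i ` {..<k} \<subseteq> V" if "i < n" for i using eV[OF that] by auto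
  have hf_meas: "hf i \<in> FM \<rightarrow>\<^sub>M rhoX" if "i < n" for i
    unfolding hf_eq FM_eq by (rule reidx_meas[OF that eV'[OF that]])
  have hf_distr: "distr FM rhoX (hf i) = rhoX" if "i < n" for i
    unfolding hf_eq FM_eq by (rule reidx_distr[OF that eV'[OF that]])
  define P where "P \<phi> = PiM {..<n} (\<lambda>i. K (hf i \<phi>))" for \<phi>
  have Pmeas: "P \<in> FM \<rightarrow>\<^sub>M prob_algebra (PiM {..<n} (\<lambda>_. borel))"
    unfolding P_def[abs_def]
    by (rule PiM_kernel_measurable) (use hf_meas Kp in \<open>auto intro: measurable_compose\<close>)
  define Q where "Q \<phi> = distr (P \<phi>) (FM \<Otimes>\<^sub>M PiM {..<n} (\<lambda>_. borel)) (\<lambda>y. (\<phi>, y))" for \<phi>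
  have Qmeas: "Q \<in> FM \<rightarrow>\<^sub>M prob_algebra (FM \<Otimes>\<^sub>M PiM {..<n} (\<lambda>_. borel))"
    unfolding Q_def by (rule measurable_distr_prob_space2[OF Pmeas]) measurable
  define NS where "NS = networked_space k V vpart rho K n e"
  have NS_def': "NS = FM \<bind> Q"
    by (simp add: NS_def networked_space_def FM_def Q_def[abs_def] P_def[abs_def] hf_def)
  have FM_sp: "FM \<in> space (prob_algebra FM)" using FM_prob by (simp add: space_prob_algebra)
  have NS_prob: "prob_space NS" unfolding NS_def' by (rule prob_space_bind'[OF FM_sp Qmeas])
  have NS_sets: "sets NS = sets (FM \<Otimes>\<^sub>M PiM {..<n} (\<lambda>_. borel))"
    unfolding NS_def' by (rule sets_bind'[OF FM_sp Qmeas])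
  have sz_eq: "sample_z k e i = (\<lambda>\<omega>. (hf i (fst \<omega>), snd \<omega> i))" for i
    by (simp add: sample_z_def[abs_def] hf_def)
  have sz_meas0: "sample_z k e i \<in> FM \<Otimes>\<^sub>M PiM {..<n} (\<lambda>_. borel) \<rightarrow>\<^sub>M rhoX \<Otimes>\<^sub>M borel" if i: "i < n" for i
    unfolding sz_eq by (intro measurable_Pair measurable_compose[OF measurable_fst hf_meas[OF i]] measurable_compose[OF measurable_snd measurable_component_singleton]) (use i in auto)
  have sz_meas: "sample_z k e i \<in> NS \<rightarrow>\<^sub>M RJ" if i: "i < n" for i
    using sz_meas0[OF i] by (simp add: measurable_cong_sets[OF NS_sets RJ_sets])
  have FM_ne: "space FM \<noteq> {}" using prob_space.not_empty[OF FM_prob] .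
  have hf_space: "hf j \<phi> \<in> space rhoX" if "j < n" "\<phi> \<in> space FM" for j \<phi>
    using measurable_space[OF hf_meas[OF that(1)] that(2)] .
  have K_space: "K (hf j \<phi>) \<in> space (prob_algebra borel)" if "j < n" "\<phi> \<in> space FM" for j \<phi>
    using measurable_space[OF Kp hf_space[OF that]] .
  have K_prob: "prob_space (K (hf j \<phi>))" and K_sets: "sets (K (hf j \<phi>)) = sets borel"
    if "j < n" "\<phi> \<in> space FM" for j \<phi>
    using K_space[OF that] by (auto simp: space_prob_algebra)
  have P_sets: "sets (P \<phi>) = sets (PiM {..<n} (\<lambda>_. borel))" if "\<phi> \<in> space FM" for \<phi>
    using measurable_space[OF Pmeas that] by (auto simp: space_prob_algebra)
  have sz_distr: "distr NS (rhoX \<Otimes>\<^sub>M borel) (sample_z k e i) = RJ" if i: "i < n" for i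
  proof -
    have "distr NS (rhoX \<Otimes>\<^sub>M borel) (sample_z k e i) = FM \<bind> (\<lambda>\<phi>. distr (Q \<phi>) (rhoX \<Otimes>\<^sub>M borel) (sample_z k e i))"
      unfolding NS_def' by (rule distr_bind[OF measurable_prob_algebraD[OF Qmeas] FM_ne sz_meas0[OF i]])
    also have "\<dots> = FM \<bind> (\<lambda>\<phi>. H (hf i \<phi>))"
    proof (rule bind_cong[OF refl])
      fix \<phi> assume \<phi>: "\<phi> \<in> space FM"
      have m1: "(\<lambda>y. (\<phi>, y)) \<in> P \<phi> \<rightarrow>\<^sub>M FM \<Otimes>\<^sub>M PiM {..<n} (\<lambda>_. borel)"
        using \<phi> by (simp add: measurable_cong_sets[OF P_sets[OF \<phi>] refl])
      have "distr (Q \<phi>) (rhoX \<Otimes>\<^sub>M borel) (sample_z k e i) = distr (P \<phi>) (rhoX \<Otimes>\<^sub>M borel) (sample_z k e i \<circ> (\<lambda>y. (\<phi>, y)))"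
        unfolding Q_def by (rule distr_distr[OF sz_meas0[OF i] m1])
      also have "sample_z k e i \<circ> (\<lambda>y. (\<phi>, y)) = (\<lambda>y. (hf i \<phi>, y)) \<circ> (\<lambda>y. y i)"
        by (simp add: sz_eq comp_def)
      also have "distr (P \<phi>) (rhoX \<Otimes>\<^sub>M borel) \<dots> = distr (distr (P \<phi>) (K (hf i \<phi>)) (\<lambda>y. y i)) (rhoX \<Otimes>\<^sub>M borel) (\<lambda>y. (hf i \<phi>, y))"
      proof (rule distr_distr[symmetric])
        show "(\<lambda>y. (hf i \<phi>, y)) \<in> K (hf i \<phi>) \<rightarrow>\<^sub>M rhoX \<Otimes>\<^sub>M borel"
          using hf_space[OF i \<phi>] by (simp add: measurable_cong_sets[OF K_sets[OF i \<phi>] refl])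
        show "(\<lambda>y. y i) \<in> P \<phi> \<rightarrow>\<^sub>M K (hf i \<phi>)"
          unfolding P_def using i by (intro measurable_component_singleton) auto
      qed
      also have "distr (P \<phi>) (K (hf i \<phi>)) (\<lambda>y. y i) = K (hf i \<phi>)"
        unfolding P_def by (rule distr_PiM_component) (use K_prob[OF _ \<phi>] i in auto)
      finally show "distr (Q \<phi>) (rhoX \<Otimes>\<^sub>M borel) (sample_z k e i) = H (hf i \<phi>)"
        by (simp add: H_def)
    qed
    also have "\<dots> = distr FM rhoX (hf i) \<bind> H"
      by (rule bind_distr[symmetric, OF hf_meas[OF i] measurable_prob_algebraD[OF Hmeas] FM_ne])
    also have "\<dots> = RJ" using hf_distr[OF i] RJ_def' by simp
    finally show ?thesis .
  qed
  have Pair_meas: "(\<lambda>y. (\<phi>, y)) \<in> P \<phi> \<rightarrow>\<^sub>M FM \<Otimes>\<^sub>M PiM {..<n} (\<lambda>_. borel)"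
    if \<phi>: "\<phi> \<in> space FM" for \<phi>
    using \<phi> by (simp add: measurable_cong_sets[OF P_sets[OF \<phi>] refl])
  have sz_measNS: "sample_z k e i \<in> NS \<rightarrow>\<^sub>M rhoX \<Otimes>\<^sub>M borel" if i: "i < n" for i
    using sz_meas0[OF i] by (simp add: measurable_cong_sets[OF NS_sets refl])
  interpret NSp: prob_space NS by (rule NS_prob)
  define Ev where "Ev = {\<omega> \<in> space NS. (\<Sum>i<n. w i * (\<xi> (sample_z k e i \<omega>) - \<mu>)) \<ge> \<epsilon>}"
  have goal_eq: "?thesis \<longleftrightarrow> measure NS Ev \<le> exp (- (s * \<sigma>\<^sup>2 / M\<^sup>2) * bennett_h (M * \<epsilon> / (s * \<sigma>\<^sup>2)))"
    by (simp add: NS_def Ev_def s_def)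
  show ?thesis
  proof (cases "M = 0 \<or> s * \<sigma>\<^sup>2 = 0")
    case True
    then have e1: "exp (- (s * \<sigma>\<^sup>2 / M\<^sup>2) * bennett_h (M * \<epsilon> / (s * \<sigma>\<^sup>2))) = 1" by auto
    show ?thesis unfolding goal_eq e1 by (rule NSp.prob_le_1)
  next
    case False
    then have Mpos: "M > 0" and spos: "s > 0" and sigpos: "\<sigma>\<^sup>2 > 0"
      using M0 s0 by (auto simp: less_le)
    interpret RJp: prob_space RJ by (rule RJ_prob)
    interpret FMp: prob_space FM by (rule FM_prob)
    define X' where "X' z = max (-M) (min M (\<xi> z - \<mu>))" for z
    have X'bnd: "-M \<le> X' z \<and> X' z \<le> M" for z using M0 by (simp add: X'_def)
    have X'AE: "AE z in RJ. \<xi> z - \<mu> = X' z"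
      using bound unfolding RJ_def[symmetric] by (rule eventually_mono) (auto simp: X'_def)
    have \<xi>m: "\<xi> \<in> borel_measurable RJ" using \<xi>_meas by (simp add: RJ_def)
    have X'm: "X' \<in> borel_measurable RJ" unfolding X'_def[abs_def] using \<xi>m by measurable
    have X'm2: "X' \<in> borel_measurable (rhoX \<Otimes>\<^sub>M borel)"
      using X'm by (simp add: measurable_cong_sets[OF RJ_sets refl])
    have X'int: "integrable RJ X'"
      using prob_integral_bounds(1)[OF RJ_prob X'm, of "-M" M] X'bnd by simp
    have X'2int: "integrable RJ (\<lambda>z. (X' z)\<^sup>2)"
    proof (rule prob_integral_bounds(1)[OF RJ_prob _, of _ 0 "M^2"])
      show "(\<lambda>z. (X' z)\<^sup>2) \<in> borel_measurable RJ" using X'm by measurable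
      fix z show "0 \<le> (X' z)\<^sup>2 \<and> (X' z)\<^sup>2 \<le> M^2"
        using X'bnd[of z] by (auto simp: abs_le_square_iff[symmetric] abs_le_iff)
    qed
    have \<xi>int: "integrable RJ \<xi>" using \<xi>_int by (simp add: RJ_def)
    have EX': "(\<integral>z. X' z \<partial>RJ) = 0"
    proof -
      have "(\<integral>z. X' z \<partial>RJ) = (\<integral>z. \<xi> z - \<mu> \<partial>RJ)"
        by (rule integral_cong_AE[OF X'm _ ]) (use \<xi>m X'AE in \<open>auto elim: eventually_mono\<close>)
      also have "\<dots> = (\<integral>z. \<xi> z \<partial>RJ) - (\<integral>z. \<mu> \<partial>RJ)"
        by (rule Bochner_Integration.integral_diff[OF \<xi>int]) simp
      also have "\<dots> = 0" using RJp.prob_space by (simp add: mean RJ_def)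
      finally show ?thesis .
    qed
    have VX': "(\<integral>z. (X' z)\<^sup>2 \<partial>RJ) = \<sigma>\<^sup>2"
    proof -
      have "(\<integral>z. (X' z)\<^sup>2 \<partial>RJ) = (\<integral>z. (\<xi> z - \<mu>)\<^sup>2 \<partial>RJ)"
        by (rule integral_cong_AE) (use \<xi>m X'm X'AE in \<open>auto elim: eventually_mono\<close>)
      then show ?thesis by (simp add: var RJ_def)
    qed
    define a where "a = M * \<epsilon> / (s * \<sigma>\<^sup>2)"
    have apos: "a > 0" using Mpos spos sigpos eps by (simp add: a_def)
    define t where "t = ln (1 + a) / M"
    have tpos: "t > 0" using apos Mpos by (simp add: t_def)
    define c where "c = exp (t * M) - 1 - t * M"
    define E where "E = (\<integral>z. exp (t * X' z) \<partial>RJ)"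
    have expX'm: "(\<lambda>z. exp (t * X' z)) \<in> borel_measurable (rhoX \<Otimes>\<^sub>M borel)" using X'm2 by measurable
    have expX'bnd: "exp (- (t * M)) \<le> exp (t * X' z) \<and> exp (t * X' z) \<le> exp (t * M)" for z
      using X'bnd[of z] tpos mult_left_mono[of "-M" "X' z" t] mult_left_mono[of "X' z" M t] by auto
    have expX'mRJ: "(\<lambda>z. exp (t * X' z)) \<in> borel_measurable RJ" using X'm by measurable
    have expX'int: "integrable RJ (\<lambda>z. exp (t * X' z))"
      and Epos': "exp (- (t * M)) \<le> E"
      using prob_integral_bounds[OF RJ_prob expX'mRJ, of "exp (- (t * M))" "exp (t * M)"] expX'bnd
      by (auto simp: E_def)
    have Epos: "E > 0" using Epos' by (rule less_le_trans[rotated]) simp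
    have Ebound: "E \<le> exp (\<sigma>\<^sup>2 / M\<^sup>2 * c)"
    proof -
      have i1: "integrable RJ (\<lambda>z. t * X' z)" using X'int by simp
      have i2: "integrable RJ (\<lambda>z. c / M\<^sup>2 * (X' z)\<^sup>2)" using X'2int by simp
      have "E \<le> (\<integral>z. 1 + t * X' z + c / M\<^sup>2 * (X' z)\<^sup>2 \<partial>RJ)"
        unfolding E_def
      proof (rule integral_mono[OF expX'int])
        show "integrable RJ (\<lambda>z. 1 + t * X' z + c / M\<^sup>2 * (X' z)\<^sup>2)" using i1 i2 by simp
        fix z
        have "\<bar>X' z\<bar> \<le> M" using X'bnd[of z] by (auto simp: abs_le_iff)
        from exp_bennett_pointwise[OF this Mpos less_imp_le[OF tpos]]
        show "exp (t * X' z) \<le> 1 + t * X' z + c / M\<^sup>2 * (X' z)\<^sup>2" by (simp add: c_def field_simps)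
      qed
      also have "\<dots> = (\<integral>z. 1 \<partial>RJ) + (\<integral>z. t * X' z \<partial>RJ) + (\<integral>z. c / M\<^sup>2 * (X' z)\<^sup>2 \<partial>RJ)"
        using i1 i2 by (simp add: Bochner_Integration.integral_add)
      also have "\<dots> = 1 + \<sigma>\<^sup>2 / M\<^sup>2 * c"
        using EX' VX' RJp.prob_space by simp
      also have "\<dots> \<le> exp (\<sigma>\<^sup>2 / M\<^sup>2 * c)" by (rule exp_ge_add_one_self)
      finally show ?thesis .
    qed
    define S' where "S' \<omega> = (\<Sum>i<n. w i * X' (sample_z k e i \<omega>))" for \<omega>
    have wX': "\<bar>w i * X' z\<bar> \<le> M" if i: "i < n" for i z
    proof -
      have "\<bar>w i * X' z\<bar> = w i * \<bar>X' z\<bar>" using wnn[OF i] by (simp add: abs_mult)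
      also have "\<dots> \<le> 1 * M" using wnn[OF i] w1[OF i] X'bnd[of z]
        by (intro mult_mono) (auto simp: abs_le_iff)
      finally show ?thesis by simp
    qed
    have S'le: "\<bar>S' \<omega>\<bar> \<le> s * M" for \<omega>
    proof -
      have "\<bar>S' \<omega>\<bar> \<le> (\<Sum>i<n. \<bar>w i * X' (sample_z k e i \<omega>)\<bar>)" unfolding S'_def by (rule sum_abs)
      also have "\<dots> \<le> (\<Sum>i<n. w i * M)"
      proof (rule sum_mono)
        fix i assume "i \<in> {..<n}"
        then have i: "i < n" by simp
        have "\<bar>w i * X' (sample_z k e i \<omega>)\<bar> = w i * \<bar>X' (sample_z k e i \<omega>)\<bar>" using wnn[OF i] by (simp add: abs_mult)
        also have "\<dots> \<le> w i * M" using wnn[OF i] X'bnd[of "sample_z k e i \<omega>"] by (intro mult_left_mono) (auto simp: abs_le_iff)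
        finally show "\<bar>w i * X' (sample_z k e i \<omega>)\<bar> \<le> w i * M" .
      qed
      also have "\<dots> = s * M" by (simp add: ssum sum_distrib_right[symmetric])
      finally show ?thesis .
    qed
    have f0bnd: "0 \<le> exp (t * S' \<omega>) \<and> exp (t * S' \<omega>) \<le> exp (t * (s * M))" for \<omega>
      using S'le[of \<omega>] tpos by (auto simp: abs_le_iff intro!: mult_left_mono)
    have S'm0: "S' \<in> borel_measurable (FM \<Otimes>\<^sub>M PiM {..<n} (\<lambda>_. borel))" unfolding S'_def[abs_def]
      using sz_meas0 X'm2 by (auto intro!: borel_measurable_sum borel_measurable_times measurable_compose[where g=X'])
    have f0m: "(\<lambda>\<omega>. exp (t * S' \<omega>)) \<in> borel_measurable (FM \<Otimes>\<^sub>M PiM {..<n} (\<lambda>_. borel))"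
      using S'm0 by measurable
    define g where "g x = (\<integral>z. exp (t * X' z) \<partial>H x)" for x
    have H_space: "H x \<in> space (prob_algebra (rhoX \<Otimes>\<^sub>M borel))" if "x \<in> space rhoX" for x
      using measurable_space[OF Hmeas that] .
    have H_prob: "prob_space (H x)" and H_sets: "sets (H x) = sets (rhoX \<Otimes>\<^sub>M borel)"
      if "x \<in> space rhoX" for x using H_space[OF that] by (auto simp: space_prob_algebra)
    have gm: "g \<in> borel_measurable rhoX" unfolding g_def[abs_def]
      by (rule measurable_compose[OF measurable_prob_algebraD[OF Hmeas] integral_measurable_subprob_algebra[OF expX'm]])
    have gbnd: "exp (- (t * M)) \<le> g x \<and> g x \<le> exp (t * M)" if x: "x \<in> space rhoX" for x
      using prob_integral_bounds(2,3)[OF H_prob[OF x], of "\<lambda>z. exp (t * X' z)" "exp (- (t * M))" "exp (t * M)"]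
        expX'bnd expX'm by (simp add: g_def measurable_cong_sets[OF H_sets[OF x] refl])
    have Kx_space: "K x \<in> space (prob_algebra borel)" if "x \<in> space rhoX" for x
      using measurable_space[OF Kp that] .
    have Kx_prob: "prob_space (K x)" and Kx_sets: "sets (K x) = sets borel"
      if "x \<in> space rhoX" for x using Kx_space[OF that] by (auto simp: space_prob_algebra)
    have Kpair: "(\<lambda>y. (x, y)) \<in> K x \<rightarrow>\<^sub>M rhoX \<Otimes>\<^sub>M borel" if x: "x \<in> space rhoX" for x
      using x by (simp add: measurable_cong_sets[OF Kx_sets[OF x] refl])
    have galt: "g x = (\<integral>y. exp (t * X' (x, y)) \<partial>K x)" if x: "x \<in> space rhoX" for x
      unfolding g_def H_def by (rule integral_distr[OF Kpair[OF x] expX'm])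
    have E_eq: "E = (\<integral>x. g x \<partial>rhoX)"
    proof -
      have "E = (\<integral>x. (\<integral>z. exp (t * X' z) \<partial>H x) \<partial>rhoX)"
        unfolding E_def RJ_def'
      proof (rule integral_bind[OF expX'm _ measurable_prob_algebraD[OF Hmeas]])
        show "\<bar>exp (t * X' z)\<bar> \<le> exp (t * M)" for z using expX'bnd[of z] by simp
        show "finite_measure rhoX" using rhoX_prob by (rule prob_space.finite_measure)
        show "AE x in rhoX. emeasure (H x) (space (H x)) \<le> ennreal 1"
          by (rule AE_I2) (simp add: prob_space.emeasure_space_1[OF H_prob])
      qed
      then show ?thesis by (simp add: g_def)
    qed
    define R where "R \<phi> = (\<Prod>i<n. g (hf i \<phi>) powr w i)" for \<phi>
    have inner: "(\<integral>\<omega>. exp (t * S' \<omega>) \<partial>Q \<phi>) \<le> R \<phi>" if \<phi>: "\<phi> \<in> space FM" for \<phi>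
    proof -
      define Kf where "Kf i = (if i < n then K (hf i \<phi>) else return (count_space UNIV) 0)" for i
      have Kf_prob: "prob_space (Kf i)" for i
        by (cases "i < n") (auto simp: Kf_def K_prob[OF _ \<phi>] intro: prob_space_return)
      interpret PSF: product_sigma_finite Kf
        unfolding product_sigma_finite_def using Kf_prob prob_space_imp_sigma_finite by blast
      have Peq: "P \<phi> = PiM {..<n} Kf" unfolding P_def by (intro PiM_cong) (auto simp: Kf_def)
      define fi where "fi i y = exp (t * (w i * X' (hf i \<phi>, y)))" for i y
      have fi_meas: "fi i \<in> borel_measurable (K (hf i \<phi>))" if i: "i < n" for i
        unfolding fi_def using measurable_compose[OF Kpair[OF hf_space[OF i \<phi>]] X'm2] by measurable
      have fi_int: "integrable (Kf i) (fi i)" if i: "i \<in> {..<n}" for i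
      proof -
        have "fi i y \<le> exp (t * M) \<and> - exp (t * M) \<le> fi i y" for y
        proof
          show "fi i y \<le> exp (t * M)"
            using wX'[of i "(hf i \<phi>, y)"] i tpos by (auto simp: fi_def abs_le_iff intro!: mult_left_mono)
          have "0 < fi i y" "0 < exp (t * M)" by (simp_all add: fi_def)
          then show "- exp (t * M) \<le> fi i y" by linarith
        qed
        moreover have i': "i < n" using i by simp
        ultimately have "integrable (K (hf i \<phi>)) (fi i)"
          using prob_integral_bounds(1)[OF K_prob[OF i' \<phi>] fi_meas[OF i'], of "- exp (t * M)" "exp (t * M)"]
          by auto
        then show ?thesis using i' by (simp add: Kf_def)
      qed
      have "(\<integral>\<omega>. exp (t * S' \<omega>) \<partial>Q \<phi>) = (\<integral>y. exp (t * S' (\<phi>, y)) \<partial>P \<phi>)"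
        unfolding Q_def by (rule integral_distr[OF Pair_meas[OF \<phi>] f0m])
      also have "\<dots> = (\<integral>y. (\<Prod>i\<in>{..<n}. fi i (y i)) \<partial>PiM {..<n} Kf)"
        unfolding Peq by (rule Bochner_Integration.integral_cong[OF refl]) (simp add: S'_def sz_eq fi_def exp_sum sum_distrib_left)
      also have "\<dots> = (\<Prod>i\<in>{..<n}. integral\<^sup>L (Kf i) (fi i))"
        by (rule PSF.product_integral_prod[OF _ fi_int]) simp
      also have "\<dots> \<le> R \<phi>" unfolding R_def
      proof (rule prod_mono, rule conjI)
        fix i assume "i \<in> {..<n}"
        then have i: "i < n" by simp
        have x: "hf i \<phi> \<in> space rhoX" by (rule hf_space[OF i \<phi>])
        have "integral\<^sup>L (Kf i) (fi i) = (\<integral>y. exp (t * X' (hf i \<phi>, y)) powr w i \<partial>K (hf i \<phi>))"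
          using i by (simp add: Kf_def fi_def[abs_def] powr_def mult.commute mult.left_commute)
        also have "\<dots> \<le> (\<integral>y. exp (t * X' (hf i \<phi>, y)) \<partial>K (hf i \<phi>)) powr w i"
        proof (rule jensen_powr[OF Kx_prob[OF x]])
          show "(\<lambda>y. exp (t * X' (hf i \<phi>, y))) \<in> borel_measurable (K (hf i \<phi>))"
            using measurable_compose[OF Kpair[OF x] X'm2] by measurable
          show "exp (- (t * M)) \<le> exp (t * X' (hf i \<phi>, y)) \<and> exp (t * X' (hf i \<phi>, y)) \<le> exp (t * M)" for y
            by (rule expX'bnd)
        qed (use wnn[OF i] w1[OF i] in auto)
        also have "\<dots> = g (hf i \<phi>) powr w i" using galt[OF x] by simp
        finally show "integral\<^sup>L (Kf i) (fi i) \<le> g (hf i \<phi>) powr w i" .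
        show "0 \<le> integral\<^sup>L (Kf i) (fi i)"
          using i by (auto simp: Kf_def fi_def intro!: integral_nonneg_AE)
      qed
      finally show ?thesis .
    qed
    define Si where "Si i = hedge k e i" for i
    define Fi where "Fi i \<psi> = g (\<lambda>j\<in>{..<k}. \<psi> (e i j))" for i \<psi>
    have Si_sub: "e i ` {..<k} \<subseteq> Si i" for i by (auto simp: Si_def hedge_def)
    have R_eq: "R \<phi> = (\<Prod>i\<in>{..<n}. Fi i (restrict \<phi> (Si i)) powr w i)" for \<phi>
    proof -
      have "(\<lambda>j\<in>{..<k}. restrict \<phi> (Si i) (e i j)) = hf i \<phi>" for i
        using Si_sub[of i] by (auto simp: hf_eq fun_eq_iff restrict_def)
      then show ?thesis by (simp add: R_def Fi_def)
    qed
    have Fi_int: "(\<integral>\<psi>. Fi i \<psi> \<partial>PiM (Si i) Mv) = E" if i: "i < n" for i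
    proof -
      have "(\<integral>\<psi>. Fi i \<psi> \<partial>PiM (Si i) Mv) = integral\<^sup>L (distr (PiM (Si i) Mv) rhoX (\<lambda>\<omega>. \<lambda>j\<in>{..<k}. \<omega> (e i j))) g"
        unfolding Fi_def by (rule integral_distr[symmetric, OF reidx_meas[OF i Si_sub] gm])
      also have "\<dots> = E" unfolding reidx_distr[OF i Si_sub] E_eq ..
      finally show ?thesis .
    qed
    have finner_app: "(\<integral>\<phi>. (\<Prod>i\<in>{..<n}. Fi i (restrict \<phi> (Si i)) powr w i) \<partial>PiM V Mv)
        \<le> (\<Prod>i\<in>{..<n}. (\<integral>\<psi>. Fi i \<psi> \<partial>PiM (Si i) Mv) powr w i)"
    proof (rule finner[where a="exp (- (t * M))" and b="exp (t * M)"])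
      show "prob_space (Mv v)" for v by (rule Mv_prob)
      show "finite V" using G by (simp add: kpartite_hypergraph_def)
      show "Si i \<subseteq> V" if "i \<in> {..<n}" for i using eV that by (auto simp: Si_def hedge_def)
      show "Fi i \<in> borel_measurable (PiM (Si i) Mv)" if "i \<in> {..<n}" for i
        unfolding Fi_def using that by (intro measurable_compose[OF reidx_meas[OF _ Si_sub] gm]) auto
      show "exp (- (t * M)) \<le> Fi i \<psi> \<and> Fi i \<psi> \<le> exp (t * M)"
        if "i \<in> {..<n}" "\<psi> \<in> space (PiM (Si i) Mv)" for i \<psi>
        unfolding Fi_def using that by (intro gbnd measurable_space[OF reidx_meas[OF _ Si_sub]]) auto
      show "0 \<le> w i" if "i \<in> {..<n}" for i using wnn that by auto
      show "sum w {i\<in>{..<n}. v \<in> Si i} \<le> 1" if "v \<in> V" for v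
      proof -
        have "{i\<in>{..<n}. v \<in> Si i} = {i. i < n \<and> v \<in> hedge k e i}" by (auto simp: Si_def)
        then show ?thesis using feas[OF that] by simp
      qed
    qed simp_all
    have Rm: "R \<in> borel_measurable FM" unfolding R_def[abs_def]
      using hf_meas gm by (auto intro!: borel_measurable_prod measurable_compose[where g=g])
    define BR where "BR = (\<Prod>i<n. exp (t * M) powr w i)"
    have Rbnd: "\<bar>R \<phi>\<bar> \<le> BR" if "\<phi> \<in> space FM" for \<phi>
      unfolding R_def BR_def
      by (rule prod_powr_bound[of _ "exp (- (t * M))"]) (use gbnd hf_space that wnn in auto)
    have Rint: "integrable FM R"
      by (rule prob_integral_bounds(1)[OF FM_prob Rm, of "- BR" BR]) (use Rbnd in \<open>fastforce simp: abs_le_iff\<close>)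
    have Qint_m: "(\<lambda>\<phi>. \<integral>\<omega>. exp (t * S' \<omega>) \<partial>Q \<phi>) \<in> borel_measurable FM"
      by (rule measurable_compose[OF measurable_prob_algebraD[OF Qmeas] integral_measurable_subprob_algebra[OF f0m]])
    have Q_prob: "prob_space (Q \<phi>)" and Q_sets: "sets (Q \<phi>) = sets (FM \<Otimes>\<^sub>M PiM {..<n} (\<lambda>_. borel))"
      if "\<phi> \<in> space FM" for \<phi> using measurable_space[OF Qmeas that] by (auto simp: space_prob_algebra)
    have Qint: "integrable FM (\<lambda>\<phi>. \<integral>\<omega>. exp (t * S' \<omega>) \<partial>Q \<phi>)"
    proof (rule prob_integral_bounds(1)[OF FM_prob Qint_m, of 0 "exp (t * (s * M))"])
      fix \<phi> assume \<phi>: "\<phi> \<in> space FM"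
      have m: "(\<lambda>\<omega>. exp (t * S' \<omega>)) \<in> borel_measurable (Q \<phi>)"
        using f0m by (simp add: measurable_cong_sets[OF Q_sets[OF \<phi>] refl])
      from prob_integral_bounds(2,3)[OF Q_prob[OF \<phi>] m, of 0 "exp (t * (s * M))"] f0bnd
      show "0 \<le> (\<integral>\<omega>. exp (t * S' \<omega>) \<partial>Q \<phi>) \<and> (\<integral>\<omega>. exp (t * S' \<omega>) \<partial>Q \<phi>) \<le> exp (t * (s * M))"
        by auto
    qed
    have MGF: "(\<integral>\<omega>. exp (t * S' \<omega>) \<partial>NS) \<le> E powr s"
    proof -
      have "(\<integral>\<omega>. exp (t * S' \<omega>) \<partial>NS) = (\<integral>\<phi>. (\<integral>\<omega>. exp (t * S' \<omega>) \<partial>Q \<phi>) \<partial>FM)"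
        unfolding NS_def'
      proof (rule integral_bind[OF f0m _ measurable_prob_algebraD[OF Qmeas]])
        show "\<bar>exp (t * S' \<omega>)\<bar> \<le> exp (t * (s * M))" for \<omega> using f0bnd[of \<omega>] by simp
        show "finite_measure FM" using FM_prob by (rule prob_space.finite_measure)
        show "AE x in FM. emeasure (Q x) (space (Q x)) \<le> ennreal 1"
          by (rule AE_I2) (simp add: prob_space.emeasure_space_1[OF Q_prob])
      qed
      also have "\<dots> \<le> (\<integral>\<phi>. R \<phi> \<partial>FM)"
        by (rule integral_mono[OF Qint Rint inner])
      also have "\<dots> \<le> (\<Prod>i\<in>{..<n}. (\<integral>\<psi>. Fi i \<psi> \<partial>PiM (Si i) Mv) powr w i)"
        using finner_app unfolding FM_eq R_eq .
      also have "\<dots> = (\<Prod>i\<in>{..<n}. E powr w i)" by (intro prod.cong refl) (simp add: Fi_int)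
      also have "\<dots> = E powr s" using Epos by (simp add: powr_sum ssum[symmetric])
      finally show ?thesis .
    qed
    have S'm: "S' \<in> borel_measurable NS" unfolding S'_def[abs_def]
      using sz_measNS X'm2 by (auto intro!: borel_measurable_sum borel_measurable_times measurable_compose[where g=X'])
    define S where "S \<omega> = (\<Sum>i<n. w i * (\<xi> (sample_z k e i \<omega>) - \<mu>))" for \<omega>
    have Sm: "S \<in> borel_measurable NS" unfolding S_def[abs_def]
      using sz_meas \<xi>m by (auto intro!: borel_measurable_sum borel_measurable_times borel_measurable_diff measurable_compose[where g=\<xi>])
    have SAE: "AE \<omega> in NS. S \<omega> = S' \<omega>"
    proof -
      have "AE \<omega> in NS. \<forall>i\<in>{..<n}. \<xi> (sample_z k e i \<omega>) - \<mu> = X' (sample_z k e i \<omega>)"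
      proof (rule AE_finite_allI)
        fix i assume "i \<in> {..<n}"
        then have i: "i < n" by simp
        show "AE \<omega> in NS. \<xi> (sample_z k e i \<omega>) - \<mu> = X' (sample_z k e i \<omega>)"
          by (rule AE_distrD[OF sz_measNS[OF i]]) (unfold sz_distr[OF i], rule X'AE)
      qed simp
      then show ?thesis by (rule eventually_mono) (simp add: S_def S'_def)
    qed
    have f0int: "integrable NS (\<lambda>\<omega>. exp (t * S' \<omega>))"
    proof (rule prob_integral_bounds(1)[OF NS_prob _, of _ 0 "exp (t * (s * M))"])
      show "(\<lambda>\<omega>. exp (t * S' \<omega>)) \<in> borel_measurable NS" using S'm by measurable
    qed (rule f0bnd)
    have f1int: "integrable NS (\<lambda>\<omega>. exp (t * S \<omega>))"
    proof (rule integrable_cong_AE_imp[OF f0int])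
      show "(\<lambda>\<omega>. exp (t * S \<omega>)) \<in> borel_measurable NS" using Sm by measurable
      show "AE \<omega> in NS. exp (t * S' \<omega>) = exp (t * S \<omega>)" using SAE by (rule eventually_mono) simp
    qed
    have int_eq: "(\<integral>\<omega>. exp (t * S \<omega>) \<partial>NS) = (\<integral>\<omega>. exp (t * S' \<omega>) \<partial>NS)"
    proof (rule integral_cong_AE)
      show "(\<lambda>\<omega>. exp (t * S \<omega>)) \<in> borel_measurable NS" using Sm by measurable
      show "(\<lambda>\<omega>. exp (t * S' \<omega>)) \<in> borel_measurable NS" using S'm by measurable
      show "AE \<omega> in NS. exp (t * S \<omega>) = exp (t * S' \<omega>)" using SAE by (rule eventually_mono) simp
    qed
    have Ev_eq: "Ev = {\<omega> \<in> space NS. exp (t * \<epsilon>) \<le> exp (t * S \<omega>)}"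
      using tpos by (auto simp: Ev_def S_def)
    have A: "measure NS Ev \<le> (\<integral>\<omega>. exp (t * S \<omega>) \<partial>NS) / exp (t * \<epsilon>)"
      unfolding Ev_eq by (rule integral_Markov_inequality_measure[OF f1int, of "space NS"]) auto
    have B: "(\<integral>\<omega>. exp (t * S \<omega>) \<partial>NS) \<le> E powr s" using MGF int_eq by simp
    have C: "E powr s \<le> exp (\<sigma>\<^sup>2 / M\<^sup>2 * c) powr s"
      by (rule powr_mono2) (use s0 Epos Ebound in auto)
    have D: "exp (\<sigma>\<^sup>2 / M\<^sup>2 * c) powr s / exp (t * \<epsilon>) = exp (s * \<sigma>\<^sup>2 / M\<^sup>2 * c - t * \<epsilon>)"
      by (simp add: powr_def exp_diff mult.commute mult.left_commute)
    have F: "s * \<sigma>\<^sup>2 / M\<^sup>2 * c - t * \<epsilon> = - (s * \<sigma>\<^sup>2 / M\<^sup>2) * bennett_h (M * \<epsilon> / (s * \<sigma>\<^sup>2))"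
    proof -
      have tM: "t * M = ln (1 + a)" using Mpos by (simp add: t_def)
      have c': "c = a - ln (1 + a)" using apos by (simp add: c_def tM)
      have h: "bennett_h (M * \<epsilon> / (s * \<sigma>\<^sup>2)) = (1 + a) * ln (1 + a) - a"
        by (simp add: bennett_h_def a_def)
      have te: "t * \<epsilon> = ln (1 + a) * a * (s * \<sigma>\<^sup>2 / M\<^sup>2)"
        using Mpos spos sigpos by (simp add: t_def a_def field_simps power2_eq_square)
      have alg: "q * (a - L) - L * a * q = - q * ((1 + a) * L - a)" for q L :: real
        by (simp add: algebra_simps)
      show ?thesis unfolding h te c' by (rule alg)
    qed
    have "measure NS Ev \<le> exp (\<sigma>\<^sup>2 / M\<^sup>2 * c) powr s / exp (t * \<epsilon>)"
      using A divide_right_mono[OF order_trans[OF B C], of "exp (t * \<epsilon>)"] by simp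
    then have "measure NS Ev \<le> exp (- (s * \<sigma>\<^sup>2 / M\<^sup>2) * bennett_h (M * \<epsilon> / (s * \<sigma>\<^sup>2)))"
      unfolding D F .
    then show ?thesis unfolding goal_eq .
  qed
qed

end
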